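(* Let $r\geq1$ be an integer, $(a_{\boldsymbol n})\in\mathbf C^{\mathbf N^r}$ and $\rho>0$ real. Suppose there is $\varepsilon>0$ such that the series $F(\boldsymbol z)=\prod_i(1-\rho z_i)\sum_{\boldsymbol n\in\mathbf N^r}a_{\boldsymbol n}\prod_iz_i^{n_i}$ converges absolutely on the domain $|z_i|\leq\rho^{-1}+\varepsilon$ ($i=1,\dots,r$). Let $\|F\|_{\rho^{-1}}=\max_{|\eta_i|=1}|F((\eta_i\rho^{-1})_i)|$. Then for all $\boldsymbol n\in\mathbf N^r$, $$|a_{\boldsymbol n}|\leq\prod_i(n_i+1)\,\|F\|_{\rho^{-1}}\,\rho^{\sum_in_i}.$$ *)

theory Defs
  imports "HOL-Analysis.Analysis"
begin

text \<open>Multi-indices in N^r are functions 'r => nat for a finite index type 'r with CARD('r) = r.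
  The coefficient of z^n in prod_i (1 - rho z_i) * sum_m a_m z^m.\<close>
definition Fcoeff :: "real \<Rightarrow> (('r::finite \<Rightarrow> nat) \<Rightarrow> complex) \<Rightarrow> ('r \<Rightarrow> nat) \<Rightarrow> complex" where
  "Fcoeff \<rho> a n = (\<Sum>S\<in>Pow (UNIV::'r set).
      (- complex_of_real \<rho>) ^ card S *
      (if (\<forall>i\<in>S. 1 \<le> n i) then a (\<lambda>i. if i \<in> S then n i - 1 else n i) else 0))"

definition monomial :: "('r::finite \<Rightarrow> complex) \<Rightarrow> ('r \<Rightarrow> nat) \<Rightarrow> complex" where
  "monomial z n = (\<Prod>i\<in>UNIV. z i ^ n i)"

definition Fser :: "real \<Rightarrow> (('r::finite \<Rightarrow> nat) \<Rightarrow> complex) \<Rightarrow> ('r \<Rightarrow> complex) \<Rightarrow> complex" where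
  "Fser \<rho> a z = infsum (\<lambda>n. Fcoeff \<rho> a n * monomial z n) UNIV"

definition Fnorm :: "real \<Rightarrow> (('r::finite \<Rightarrow> nat) \<Rightarrow> complex) \<Rightarrow> real" where
  "Fnorm \<rho> a = (SUP \<eta>\<in>{\<eta>::'r \<Rightarrow> complex. \<forall>i. norm (\<eta> i) = 1}.
       norm (Fser \<rho> a (\<lambda>i. \<eta> i / complex_of_real \<rho>)))"

end

theory Submission
  imports Defs
begin


lemma box_eq: "{m::'r::finite\<Rightarrow>nat. \<forall>i. m i \<le> n i} = PiE UNIV (\<lambda>i. {..n i})"
  by (auto simp: PiE_UNIV_domain Pi_def)

lemma finite_box[simp]: "finite {m::'r::finite\<Rightarrow>nat. \<forall>i. m i \<le> n i}"
  unfolding box_eq by (simp add: finite_PiE)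

lemma card_box: "card {m::'r::finite\<Rightarrow>nat. \<forall>i. m i \<le> n i} = (\<Prod>i\<in>UNIV. n i + 1)"
  unfolding box_eq by (simp add: card_PiE)

lemma sum_ind: "(\<Sum>i\<in>(UNIV::'r::finite set). if i\<in>S then 1 else 0::nat) = card S"
  by (simp add: sum.If_cases)

lemma alt_sum_pow:
  assumes "finite T"
  shows "(\<Sum>S\<in>Pow T. (-1::complex) ^ card S) = (if T = {} then 1 else 0)"
proof -
  have "(\<Prod>x\<in>T. (1::complex) - 1) = (\<Sum>X\<in>Pow T. (-1) ^ card X * (\<Prod>x\<in>X. 1) * (\<Prod>x\<in>T-X. 1))"
    by (rule prod_diff_conv_sum[OF assms])
  then have e: "(\<Sum>X\<in>Pow T. (-1::complex) ^ card X) = 0 ^ card T" by simp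
  show ?thesis
  proof (cases "T = {}")
    case False
    then have "card T \<noteq> 0" using assms by simp
    then show ?thesis using e False by (simp add: zero_power)
  qed simp
qed

lemma inversion:
  fixes f :: "('r::finite \<Rightarrow> nat) \<Rightarrow> complex" and x :: complex
  shows "(\<Sum>m\<in>{m. \<forall>i. m i \<le> n i}. (\<Sum>S\<in>Pow UNIV. (-x)^card S *
      (if \<forall>i\<in>S. 1 \<le> m i then f (\<lambda>i. if i\<in>S then m i - 1 else m i) else 0)) * x^(sum n UNIV - sum m UNIV)) = f n"
proof -
  define B where "B = {m::'r\<Rightarrow>nat. \<forall>i. m i \<le> n i}"
  define ind where "ind S = (\<lambda>i::'r. if i \<in> S then 1 else 0::nat)" for S
  define T where "T p = {i. p i < n i}" for p :: "'r \<Rightarrow> nat"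
  define h where "h S p = (-1)^card S * x^(sum n UNIV - sum p UNIV) * f p" for S :: "'r set" and p
  have "?thesis \<longleftrightarrow> (\<Sum>m\<in>B. \<Sum>S\<in>Pow UNIV. (if \<forall>i\<in>S. 1 \<le> m i then (-x)^card S *
      f (\<lambda>i. if i\<in>S then m i - 1 else m i) * x^(sum n UNIV - sum m UNIV) else 0)) = f n"
    unfolding B_def sum_distrib_right by (intro arg_cong[where f="\<lambda>t. t = f n"] sum.cong refl) auto
  also have "(\<Sum>m\<in>B. \<Sum>S\<in>Pow UNIV. (if \<forall>i\<in>S. 1 \<le> m i then (-x)^card S *
      f (\<lambda>i. if i\<in>S then m i - 1 else m i) * x^(sum n UNIV - sum m UNIV) else 0))
    = (\<Sum>S\<in>Pow UNIV. \<Sum>m\<in>B. (if \<forall>i\<in>S. 1 \<le> m i then (-x)^card S *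
      f (\<lambda>i. if i\<in>S then m i - 1 else m i) * x^(sum n UNIV - sum m UNIV) else 0))"
    by (rule sum.swap)
  also have "\<dots> = (\<Sum>S\<in>Pow UNIV. \<Sum>p\<in>{p\<in>B. S \<subseteq> T p}. h S p)"
  proof (rule sum.cong[OF refl])
    fix S :: "'r set"
    have "(\<Sum>m\<in>B. (if \<forall>i\<in>S. 1 \<le> m i then (-x)^card S *
      f (\<lambda>i. if i\<in>S then m i - 1 else m i) * x^(sum n UNIV - sum m UNIV) else 0))
      = (\<Sum>m\<in>{m\<in>B. \<forall>i\<in>S. 1 \<le> m i}. (-x)^card S *
      f (\<lambda>i. if i\<in>S then m i - 1 else m i) * x^(sum n UNIV - sum m UNIV))"
      by (rule sum.inter_filter[symmetric]) (simp add: B_def)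
    also have "\<dots> = (\<Sum>p\<in>{p\<in>B. S \<subseteq> T p}. h S p)"
    proof -
    have "(\<Sum>p\<in>{p\<in>B. S \<subseteq> T p}. h S p) = (\<Sum>m\<in>{m\<in>B. \<forall>i\<in>S. 1 \<le> m i}. (-x)^card S *
      f (\<lambda>i. if i\<in>S then m i - 1 else m i) * x^(sum n UNIV - sum m UNIV))"
    proof (rule sum.reindex_bij_witness[where j="\<lambda>p i. p i + ind S i" and i="\<lambda>m i. if i\<in>S then m i - 1 else m i"])
      fix p assume p: "p \<in> {p\<in>B. S \<subseteq> T p}"
      show "(\<lambda>i. if i \<in> S then p i + ind S i - 1 else p i + ind S i) = p"
        by (auto simp: ind_def)
      show "(\<lambda>i. p i + ind S i) \<in> {m\<in>B. \<forall>i\<in>S. 1 \<le> m i}"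
        using p by (auto simp: B_def T_def ind_def Suc_le_eq subset_iff)
      have s1: "sum (\<lambda>i. p i + ind S i) UNIV = sum p UNIV + card S"
        unfolding sum.distrib by (simp add: ind_def sum_ind)
      have "sum (\<lambda>i. p i + ind S i) UNIV \<le> sum n UNIV"
        using p by (intro sum_mono) (auto simp: B_def T_def ind_def subset_iff Suc_le_eq)
      then have le: "sum p UNIV + card S \<le> sum n UNIV" using s1 by simp
      have "x ^ (sum n UNIV - sum p UNIV) = x ^ card S * x^(sum n UNIV - sum (\<lambda>i. p i + ind S i) UNIV)"
      proof -
        have "sum n UNIV - sum p UNIV = card S + (sum n UNIV - sum (\<lambda>i. p i + ind S i) UNIV)"
          unfolding s1 using le by simp
        then show ?thesis by (simp add: power_add)
      qed
      moreover have "(\<lambda>i. if i \<in> S then p i + ind S i - 1 else p i + ind S i) = p"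
        by (auto simp: ind_def)
      ultimately show "(- x) ^ card S * f (\<lambda>i. if i \<in> S then p i + ind S i - 1 else p i + ind S i) *
         x ^ (sum n UNIV - sum (\<lambda>i. p i + ind S i) UNIV) = h S p"
        unfolding h_def power_minus[of x] by (simp only: mult_ac)
    next
      fix m assume m: "m \<in> {m\<in>B. \<forall>i\<in>S. 1 \<le> m i}"
      show "(\<lambda>i. (if i \<in> S then m i - 1 else m i) + ind S i) = m"
        using m by (auto simp: ind_def fun_eq_iff)
      show "(\<lambda>i. if i \<in> S then m i - 1 else m i) \<in> {p\<in>B. S \<subseteq> T p}"
      proof -
        have m1: "\<forall>i. m i \<le> n i" "\<forall>i\<in>S. 1 \<le> m i" using m by (auto simp: B_def)
        have "\<forall>i\<in>S. m i - 1 < n i"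
        proof
          fix i assume "i \<in> S" then have "1 \<le> m i" "m i \<le> n i" using m1 by auto
          then show "m i - 1 < n i" by linarith
        qed
        then show ?thesis using m1 by (auto simp: B_def T_def)
      qed
    qed
    then show ?thesis by simp
    qed
    finally show "(\<Sum>m\<in>B. (if \<forall>i\<in>S. 1 \<le> m i then (-x)^card S *
      f (\<lambda>i. if i\<in>S then m i - 1 else m i) * x^(sum n UNIV - sum m UNIV) else 0)) =
      (\<Sum>p\<in>{p\<in>B. S \<subseteq> T p}. h S p)" .
  qed
  also have "\<dots> = (\<Sum>S\<in>Pow UNIV. \<Sum>p\<in>B. if S \<subseteq> T p then h S p else 0)"
    by (intro sum.cong refl sum.inter_filter) (simp add: B_def)
  also have "\<dots> = (\<Sum>p\<in>B. \<Sum>S\<in>Pow UNIV. if S \<subseteq> T p then h S p else 0)"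
    by (rule sum.swap)
  also have "\<dots> = (\<Sum>p\<in>B. x^(sum n UNIV - sum p UNIV) * f p * (\<Sum>S\<in>Pow (T p). (-1)^card S))"
  proof (rule sum.cong[OF refl])
    fix p
    have "(\<Sum>S\<in>Pow UNIV. if S \<subseteq> T p then h S p else 0) = (\<Sum>S\<in>{S\<in>Pow UNIV. S \<subseteq> T p}. h S p)"
      by (rule sum.inter_filter[symmetric]) simp
    also have "{S\<in>Pow UNIV. S \<subseteq> T p} = Pow (T p)" by auto
    finally show "(\<Sum>S\<in>Pow UNIV. if S \<subseteq> T p then h S p else 0) = x^(sum n UNIV - sum p UNIV) * f p * (\<Sum>S\<in>Pow (T p). (-1)^card S)"
      by (simp add: h_def sum_distrib_left algebra_simps)
  qed
  also have "\<dots> = (\<Sum>p\<in>B. if p = n then f n else 0)"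
  proof (rule sum.cong[OF refl])
    fix p assume p: "p \<in> B"
    have "T p = {} \<longleftrightarrow> p = n" using p by (auto simp: T_def B_def fun_eq_iff intro: antisym) (meson le_less)
    then show "x^(sum n UNIV - sum p UNIV) * f p * (\<Sum>S\<in>Pow (T p). (-1)^card S) = (if p = n then f n else 0)"
      by (simp add: alt_sum_pow)
  qed
  also have "\<dots> = f n" by (simp add: B_def)
  finally show ?thesis by simp
qed




definition om :: "nat \<Rightarrow> complex" where
  "om N = exp (\<i> * complex_of_real (2 * pi / real N))"

definition ee :: "nat \<Rightarrow> nat \<Rightarrow> nat \<Rightarrow> complex" where
  "ee N k m = (\<Sum>t<N. om N ^ (t * k) * cnj (om N ^ (t * m))) / of_nat N"

lemma norm_om[simp]: "norm (om N) = 1"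
  unfolding om_def by (simp only: norm_exp_i_times)

lemma norm_om_pow[simp]: "norm (om N ^ k) = 1"
  by (simp add: norm_power)

lemma ee_same: "N > 0 \<Longrightarrow> ee N m m = 1"
proof -
  assume N: "N > 0"
  have "om N ^ (t * m) * cnj (om N ^ (t * m)) = 1" for t
    using complex_norm_square[of "om N ^ (t*m)"] by simp
  then show ?thesis using N by (simp add: ee_def)
qed

lemma ee_norm: "norm (ee N k m) \<le> 1"
proof (cases "N = 0")
  case False
  have "norm (\<Sum>t<N. om N ^ (t * k) * cnj (om N ^ (t * m))) \<le> (\<Sum>t<N. norm (om N ^ (t * k) * cnj (om N ^ (t * m))))"
    by (rule norm_sum)
  also have "\<dots> = N" by (simp add: norm_mult norm_power)
  finally show ?thesis using False by (simp add: ee_def norm_divide)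
qed (simp add: ee_def)

lemma ee_diff:
  assumes "k \<noteq> m" "k < N" "m < N"
  shows "ee N k m = 0"
proof -
  have N: "N > 0" using assms by simp
  define \<theta> where "\<theta> = 2 * pi * (real k - real m) / real N"
  define q where "q = exp (\<i> * complex_of_real \<theta>)"
  have ok: "om N ^ k = exp (\<i> * complex_of_real (2 * pi * real k / real N))"
    unfolding om_def exp_of_nat_mult[symmetric] by (simp add: algebra_simps)
  have om': "cnj (om N) ^ m = exp (- (\<i> * complex_of_real (2 * pi * real m / real N)))"
    unfolding om_def exp_cnj exp_of_nat_mult[symmetric] by (simp add: algebra_simps)
  have q: "q = om N ^ k * cnj (om N) ^ m"
    unfolding ok om' q_def exp_add[symmetric] \<theta>_def by (simp add: algebra_simps diff_divide_distrib)
  have "om N ^ (t * k) * cnj (om N ^ (t * m)) = q ^ t" for t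
    unfolding q by (simp add: power_mult_distrib power_mult[symmetric] mult.commute)
  then have s: "(\<Sum>t<N. om N ^ (t * k) * cnj (om N ^ (t * m))) = (\<Sum>t<N. q ^ t)" by simp
  have qN: "q ^ N = 1"
  proof -
    have "q ^ N = exp (of_nat N * (\<i> * complex_of_real \<theta>))" unfolding q_def exp_of_nat_mult ..
    also have "of_nat N * (\<i> * complex_of_real \<theta>) = \<i> * complex_of_real (2 * pi * (real k - real m))"
      using N by (simp add: \<theta>_def)
    also have "exp \<dots> = 1"
      unfolding exp_eq_1 by (auto intro!: exI[of _ "int k - int m"])
    finally show ?thesis .
  qed
  have q1: "q \<noteq> 1"
  proof
    assume "q = 1"
    then obtain n :: int where n: "\<theta> = of_int (2 * n) * pi" unfolding q_def exp_eq_1 by auto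
    then have "2 * pi * (real k - real m) = 2 * pi * (of_int n * real N)"
      using N unfolding \<theta>_def by (simp add: field_simps)
    then have "real k - real m = of_int n * real N" by simp
    then have e: "int k - int m = n * int N" by (metis of_int_eq_iff of_int_diff of_int_mult of_int_of_nat_eq)
    show False
    proof (cases "n = 0")
      case True then show False using e assms by simp
    next
      case False
      then have "1 \<le> \<bar>n\<bar>" by linarith
      then have "\<bar>n * int N\<bar> \<ge> int N" by (simp add: abs_mult mult_le_cancel_right1)
      moreover have "\<bar>int k - int m\<bar> < int N" using assms by linarith
      ultimately show False using e by simp
    qed
  qed
  show ?thesis unfolding ee_def s using q1 qN by (simp add: sum_gp_strict)
qed




lemma infsum_sum_swap:
  fixes f :: "'j \<Rightarrow> 'a \<Rightarrow> complex"
  assumes "finite J" "\<And>j. j\<in>J \<Longrightarrow> f j summable_on A"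
  shows "(\<lambda>x. \<Sum>j\<in>J. f j x) summable_on A \<and> infsum (\<lambda>x. \<Sum>j\<in>J. f j x) A = (\<Sum>j\<in>J. infsum (f j) A)"
  using assms
proof (induction J rule: finite_induct)
  case (insert j J)
  then have s1: "f j summable_on A" and IH: "(\<lambda>x. \<Sum>j\<in>J. f j x) summable_on A"
      "infsum (\<lambda>x. \<Sum>j\<in>J. f j x) A = (\<Sum>j\<in>J. infsum (f j) A)" by auto
  show ?case using insert(1,2) s1 IH by (simp add: summable_on_add infsum_add)
qed simp

lemma grid_delta:
  assumes N: "N > 0"
  shows "(\<Sum>j\<in>PiE (UNIV::'r::finite set) (\<lambda>_. {..<N}). monomial (\<lambda>i. om N ^ j i) k * cnj (monomial (\<lambda>i. om N ^ j i) m))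
       = of_nat N ^ CARD('r) * (\<Prod>i\<in>UNIV. ee N (k i) (m i))"
proof -
  have "(\<Prod>i\<in>UNIV. ee N (k i) (m i)) = (\<Prod>i\<in>(UNIV::'r set). \<Sum>t\<in>{..<N}. om N ^ (t * k i) * cnj (om N ^ (t * m i))) / of_nat N ^ CARD('r)"
    unfolding ee_def prod_dividef by simp
  also have "(\<Prod>i\<in>(UNIV::'r set). \<Sum>t\<in>{..<N}. om N ^ (t * k i) * cnj (om N ^ (t * m i)))
     = (\<Sum>j\<in>PiE (UNIV::'r set) (\<lambda>_. {..<N}). \<Prod>i\<in>UNIV. om N ^ (j i * k i) * cnj (om N ^ (j i * m i)))"
    by (rule prod_sum_PiE) auto
  also have "\<dots> = (\<Sum>j\<in>PiE (UNIV::'r::finite set) (\<lambda>_. {..<N}). monomial (\<lambda>i. om N ^ j i) k * cnj (monomial (\<lambda>i. om N ^ j i) m))"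
    unfolding monomial_def cnj_prod prod.distrib[symmetric] power_mult[symmetric] ..
  finally show ?thesis using N by simp
qed

lemma card_grid: "card (PiE (UNIV::'r::finite set) (\<lambda>_. {..<N})) = N ^ CARD('r)"
  by (simp add: card_PiE)

lemma norm_monomial_torus: "(\<forall>i. norm (\<eta> i) = 1) \<Longrightarrow> norm (monomial \<eta> k) = 1"
  unfolding monomial_def by (simp add: prod_norm[symmetric] norm_power)




lemma cauchy:
  fixes w :: "('r::finite \<Rightarrow> nat) \<Rightarrow> complex"
  assumes sw: "(\<lambda>k. norm (w k)) summable_on UNIV"
    and bound: "\<And>\<eta>. (\<forall>i. norm (\<eta> i) = 1) \<Longrightarrow> norm (infsum (\<lambda>k. w k * monomial \<eta> k) UNIV) \<le> M"
  shows "norm (w m) \<le> M"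
proof (rule field_le_epsilon)
  fix e :: real assume e: "e > 0"
  define nw where "nw k = norm (w k)" for k
  define W where "W = infsum nw UNIV"
  have snw: "nw summable_on UNIV" using sw by (simp add: nw_def[abs_def])
  obtain F where F: "finite F" "dist (sum nw F) W \<le> e"
    using infsum_finite_approximation[OF snw e] unfolding W_def by blast
  define N where "N = Suc ((\<Sum>k\<in>F. sum k UNIV) + sum m UNIV)"
  define Bx where "Bx = {k::'r\<Rightarrow>nat. \<forall>i. k i < N}"
  have N: "N > 0" by (simp add: N_def)
  have le1: "k i \<le> sum k UNIV" for k :: "'r \<Rightarrow> nat" and i
    by (rule member_le_sum) auto
  have FB: "F \<subseteq> Bx"
  proof
    fix k assume k: "k \<in> F"
    have "sum k UNIV \<le> (\<Sum>k\<in>F. sum k UNIV)" by (rule member_le_sum) (use k F in auto)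
    then show "k \<in> Bx" using le1[of k] by (auto simp: Bx_def N_def intro: le_less_trans) (meson le_imp_less_Suc le_trans trans_le_add1)
  qed
  have mB: "m \<in> Bx" using le1[of m] by (auto simp: Bx_def N_def) (meson le_imp_less_Suc le_trans le_add2)
  define G where "G = PiE (UNIV::'r set) (\<lambda>_. {..<N})"
  define eta where "eta j = (\<lambda>i. om N ^ j i)" for j :: "'r \<Rightarrow> nat"
  have eta1: "\<forall>i. norm (eta j i) = 1" for j by (simp add: eta_def)
  define \<delta> where "\<delta> k = (\<Prod>i\<in>UNIV. ee N (k i) (m i))" for k
  have nd: "norm (\<delta> k) \<le> 1" for k
    unfolding \<delta>_def prod_norm[symmetric] by (rule prod_le_1) (auto simp: ee_norm)

  have sumw: "(\<lambda>k. w k * c k) summable_on UNIV" if "\<And>k. norm (c k) \<le> 1" for c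
  proof (rule Infinite_Sum.abs_summable_summable, rule Infinite_Sum.abs_summable_on_comparison_test[OF sw])
    fix k :: "'r \<Rightarrow> nat" assume "k \<in> UNIV" show "norm (w k * c k) \<le> norm (w k)" using that[of k]
      by (simp add: norm_mult mult_left_le)
  qed
  define Avg where "Avg = (\<Sum>j\<in>G. infsum (\<lambda>k. w k * monomial (eta j) k) UNIV * cnj (monomial (eta j) m)) * (1 / of_nat N ^ CARD('r))"
  have "norm (\<Sum>j\<in>G. infsum (\<lambda>k. w k * monomial (eta j) k) UNIV * cnj (monomial (eta j) m))
      \<le> (\<Sum>j\<in>G. norm (infsum (\<lambda>k. w k * monomial (eta j) k) UNIV * cnj (monomial (eta j) m)))"
    by (rule norm_sum)
  also have "\<dots> \<le> (\<Sum>j\<in>G. M)"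
  proof (rule sum_mono)
    fix j
    show "norm (infsum (\<lambda>k. w k * monomial (eta j) k) UNIV * cnj (monomial (eta j) m)) \<le> M"
      using bound[OF eta1[of j]] norm_monomial_torus[OF eta1[of j]] by (simp add: norm_mult)
  qed
  also have "\<dots> = of_nat N ^ CARD('r) * M" by (simp add: G_def card_grid)
  finally have nAvg: "norm Avg \<le> M" using N unfolding Avg_def by (simp add: norm_mult norm_divide norm_power field_simps)
  have AvgEq: "Avg = infsum (\<lambda>k. w k * \<delta> k) UNIV"
  proof -
    have "(\<Sum>j\<in>G. infsum (\<lambda>k. w k * monomial (eta j) k) UNIV * cnj (monomial (eta j) m))
        = (\<Sum>j\<in>G. infsum (\<lambda>k. w k * monomial (eta j) k * cnj (monomial (eta j) m)) UNIV)"
      by (intro sum.cong refl infsum_cmult_left[symmetric] sumw) (simp add: norm_monomial_torus[OF eta1])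
    also have "\<dots> = infsum (\<lambda>k. \<Sum>j\<in>G. w k * monomial (eta j) k * cnj (monomial (eta j) m)) UNIV"
      by (rule infsum_sum_swap[THEN conjunct2, symmetric])
         (auto simp: G_def mult.assoc norm_mult norm_monomial_torus[OF eta1] finite_PiE intro!: sumw)
    also have "\<dots> = infsum (\<lambda>k. w k * (of_nat N ^ CARD('r) * \<delta> k)) UNIV"
      by (intro infsum_cong) (simp add: sum_distrib_left[symmetric] mult.assoc G_def eta_def \<delta>_def grid_delta[OF N])
    finally have "Avg = infsum (\<lambda>k. w k * (of_nat N ^ CARD('r) * \<delta> k)) UNIV * (1 / of_nat N ^ CARD('r))"
      unfolding Avg_def by simp
    also have "\<dots> = infsum (\<lambda>k. w k * (of_nat N ^ CARD('r) * \<delta> k) * (1 / of_nat N ^ CARD('r))) UNIV"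
      by (rule infsum_cmult_left[symmetric])
        (use summable_on_cmult_left[OF sumw[of \<delta>, OF nd], of "of_nat N ^ CARD('r)"] in \<open>simp add: mult_ac\<close>)
    also have "\<dots> = infsum (\<lambda>k. w k * \<delta> k) UNIV"
      using N by (intro infsum_cong) simp
    finally show ?thesis .
  qed
  define g where "g k = (if k \<in> Bx then 0 else w k * \<delta> k)" for k
  have split: "w k * \<delta> k = (if k = m then w m else 0) + g k" for k
  proof (cases "k = m")
    case True then show ?thesis using mB N by (simp add: g_def \<delta>_def ee_same)
  next
    case False
    show ?thesis
    proof (cases "k \<in> Bx")
      case True
      from False obtain i where "k i \<noteq> m i" by auto
      then have "ee N (k i) (m i) = 0" using True mB by (intro ee_diff) (auto simp: Bx_def)
      then have "\<delta> k = 0" unfolding \<delta>_def by (intro prod_zero) auto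
      then show ?thesis using False True by (simp add: g_def)
    qed (use False in \<open>simp add: g_def\<close>)
  qed
  have sg: "g summable_on UNIV"
    by (rule Infinite_Sum.abs_summable_summable, rule Infinite_Sum.abs_summable_on_comparison_test[OF sw])
       (auto simp: g_def norm_mult intro: mult_left_le nd)
  have s1: "(\<lambda>k. if k = m then w m else 0) summable_on UNIV"
    by (rule Infinite_Sum.abs_summable_summable, rule Infinite_Sum.abs_summable_on_comparison_test[OF sw]) auto
  have sd: "(\<lambda>k. w k * \<delta> k) summable_on UNIV" by (rule sumw) (rule nd)
  have "infsum (\<lambda>k. w k * \<delta> k) UNIV = infsum (\<lambda>k. (if k = m then w m else 0) + g k) UNIV"
    using split by simp
  also have "\<dots> = infsum (\<lambda>k. if k = m then w m else 0) UNIV + infsum g UNIV"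
    by (rule infsum_add[OF s1 sg])
  also have "infsum (\<lambda>k. if k = m then w m else 0) UNIV = infsum (\<lambda>_. w m) {m}"
    by (rule infsum_cong_neutral) auto
  also have "\<dots> = w m" by simp
  finally have wm: "w m = Avg - infsum g UNIV" using AvgEq by simp
  have ag: "(\<lambda>k. norm (g k)) summable_on UNIV"
    by (rule Infinite_Sum.abs_summable_on_comparison_test[OF sw]) (auto simp: g_def norm_mult intro: mult_left_le nd)
  define h where "h k = (if k \<in> F then 0 else nw k)" for k
  define h2 where "h2 k = (if k \<in> F then nw k else 0)" for k
  have nn: "nw k \<ge> 0" for k by (simp add: nw_def)
  have sh: "h summable_on UNIV"
    by (rule summable_on_comparison_test[OF snw]) (auto simp: h_def nn)
  have sh2: "h2 summable_on UNIV"
    by (rule summable_on_comparison_test[OF snw]) (auto simp: h2_def nn)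
  have "norm (infsum g UNIV) \<le> infsum (\<lambda>k. norm (g k)) UNIV"
    by (rule Infinite_Sum.norm_infsum_bound[OF ag])
  also have "\<dots> \<le> infsum h UNIV"
  proof (rule infsum_mono[OF ag sh])
    fix k :: "'r \<Rightarrow> nat"
    show "norm (g k) \<le> h k"
    proof (cases "k \<in> F")
      case True then have "k \<in> Bx" using FB by auto
      then show ?thesis by (simp add: g_def h_def nn)
    next
      case False then show ?thesis
        by (simp add: g_def h_def nw_def norm_mult mult_left_le nd)
    qed
  qed
  also have "infsum h UNIV = W - sum nw F"
  proof -
    have "infsum h UNIV + infsum h2 UNIV = infsum (\<lambda>k. h k + h2 k) UNIV"
      by (rule infsum_add[OF sh sh2, symmetric])
    also have "(\<lambda>k. h k + h2 k) = nw" by (auto simp: h_def h2_def)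
    also have "infsum h2 UNIV = infsum nw F"
      by (rule infsum_cong_neutral) (auto simp: h2_def)
    also have "infsum nw F = sum nw F" using F(1) by simp
    finally show ?thesis unfolding W_def by simp
  qed
  also have "W - sum nw F \<le> e" using F(2) by (simp add: dist_real_def)
  finally have ng: "norm (infsum g UNIV) \<le> e" .
  have "norm (w m) \<le> norm Avg + norm (infsum g UNIV)" unfolding wm by (rule norm_triangle_ineq4)
  then show "norm (w m) \<le> M + e" using nAvg ng by simp
qed




theorem mainTheorem8:
  fixes a :: "('r::finite \<Rightarrow> nat) \<Rightarrow> complex" and \<rho> :: real
  assumes "\<rho> > 0"
    and "\<exists>\<epsilon>>0. \<forall>z::'r \<Rightarrow> complex. (\<forall>i. norm (z i) \<le> 1 / \<rho> + \<epsilon>) \<longrightarrow>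
            (\<lambda>n. norm (Fcoeff \<rho> a n * monomial z n)) summable_on UNIV"
  shows "\<forall>n. norm (a n) \<le> (\<Prod>i\<in>UNIV. real (n i + 1)) * Fnorm \<rho> a * \<rho> ^ (\<Sum>i\<in>UNIV. n i)"
proof
  fix n :: "'r \<Rightarrow> nat"
  have rho: "\<rho> > 0" by fact
  define c where "c = Fcoeff \<rho> a"
  define z0 where "z0 = (\<lambda>i::'r. complex_of_real (1 / \<rho>))"
  define w where "w k = c k * monomial z0 k" for k
  obtain \<epsilon> where \<epsilon>: "\<epsilon> > 0" "\<forall>z::'r \<Rightarrow> complex. (\<forall>i. norm (z i) \<le> 1 / \<rho> + \<epsilon>) \<longrightarrow>
            (\<lambda>n. norm (Fcoeff \<rho> a n * monomial z n)) summable_on UNIV" using assms(2) by blast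
  have sw: "(\<lambda>k. norm (w k)) summable_on UNIV"
    using \<epsilon>(2)[rule_format, of z0] \<epsilon>(1) rho by (simp add: z0_def w_def c_def norm_divide)
  have mono_split: "monomial (\<lambda>i. \<eta> i / complex_of_real \<rho>) k = monomial \<eta> k * monomial z0 k" for \<eta> k
    unfolding monomial_def z0_def prod.distrib[symmetric] power_mult_distrib[symmetric]
    by (simp add: divide_inverse)
  have tor: "norm (infsum (\<lambda>k. w k * monomial \<eta> k) UNIV) \<le> Fnorm \<rho> a" if \<eta>: "\<forall>i. norm (\<eta> i) = 1" for \<eta>
  proof -
    have eqF: "Fser \<rho> a (\<lambda>i. \<xi> i / complex_of_real \<rho>) = infsum (\<lambda>k. w k * monomial \<xi> k) UNIV" for \<xi>
      unfolding Fser_def mono_split w_def c_def by (simp add: mult_ac)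
    have bnd: "norm (infsum (\<lambda>k. w k * monomial \<xi> k) UNIV) \<le> infsum (\<lambda>k. norm (w k)) UNIV"
      if "\<forall>i. norm (\<xi> i) = 1" for \<xi>
    proof -
      have nm: "norm (w k * monomial \<xi> k) = norm (w k)" for k
        using norm_monomial_torus[OF that] by (simp add: norm_mult)
      have "(\<lambda>k. norm (w k * monomial \<xi> k)) summable_on UNIV" using sw by (simp add: nm)
      from Infinite_Sum.norm_infsum_bound[OF this] show ?thesis by (simp add: nm)
    qed
    have "norm (Fser \<rho> a (\<lambda>i. \<eta> i / complex_of_real \<rho>)) \<le> Fnorm \<rho> a"
      unfolding Fnorm_def
    proof (rule cSUP_upper)
      show "\<eta> \<in> {\<eta>. \<forall>i. norm (\<eta> i) = 1}" using \<eta> by simp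
      show "bdd_above ((\<lambda>\<eta>. norm (Fser \<rho> a (\<lambda>i. \<eta> i / complex_of_real \<rho>))) ` {\<eta>. \<forall>i. norm (\<eta> i) = 1})"
        by (rule bdd_aboveI2[where M="infsum (\<lambda>k. norm (w k)) UNIV"]) (auto simp: eqF intro: bnd)
    qed
    then show ?thesis by (simp add: eqF)
  qed
  have cb: "norm (c m) \<le> Fnorm \<rho> a * \<rho> ^ sum m UNIV" for m
  proof -
    have "norm (w m) \<le> Fnorm \<rho> a" by (rule cauchy[OF sw tor])
    moreover have "norm (monomial z0 m) = (1 / \<rho>) ^ sum m UNIV"
      unfolding monomial_def z0_def power_sum prod_norm[symmetric] using rho by (simp add: norm_power norm_divide)
    ultimately have "norm (c m) * (1 / \<rho>) ^ sum m UNIV \<le> Fnorm \<rho> a"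
      by (simp add: w_def norm_mult)
    then show ?thesis using rho by (simp add: field_simps power_divide)
  qed
  define B where "B = {m::'r\<Rightarrow>nat. \<forall>i. m i \<le> n i}"
  have "a n = (\<Sum>m\<in>B. c m * complex_of_real \<rho> ^ (sum n UNIV - sum m UNIV))"
    unfolding B_def c_def Fcoeff_def by (rule inversion[symmetric])
  then have "norm (a n) \<le> (\<Sum>m\<in>B. norm (c m * complex_of_real \<rho> ^ (sum n UNIV - sum m UNIV)))"
    by (simp add: norm_sum)
  also have "\<dots> \<le> (\<Sum>m\<in>B. Fnorm \<rho> a * \<rho> ^ sum n UNIV)"
  proof (rule sum_mono)
    fix m assume m: "m \<in> B"
    have le: "sum m UNIV \<le> sum n UNIV" using m by (intro sum_mono) (auto simp: B_def)
    have "norm (c m * complex_of_real \<rho> ^ (sum n UNIV - sum m UNIV)) = norm (c m) * \<rho> ^ (sum n UNIV - sum m UNIV)"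
      using rho by (simp add: norm_mult norm_power)
    also have "\<dots> \<le> Fnorm \<rho> a * \<rho> ^ sum m UNIV * \<rho> ^ (sum n UNIV - sum m UNIV)"
      using cb[of m] rho by (intro mult_right_mono) auto
    also have "\<dots> = Fnorm \<rho> a * \<rho> ^ sum n UNIV"
      using le by (simp add: mult.assoc power_add[symmetric])
    finally show "norm (c m * complex_of_real \<rho> ^ (sum n UNIV - sum m UNIV)) \<le> Fnorm \<rho> a * \<rho> ^ sum n UNIV" .
  qed
  also have "\<dots> = (\<Prod>i\<in>UNIV. real (n i + 1)) * Fnorm \<rho> a * \<rho> ^ (\<Sum>i\<in>UNIV. n i)"
    unfolding B_def by (simp add: card_box)
  finally show "norm (a n) \<le> (\<Prod>i\<in>UNIV. real (n i + 1)) * Fnorm \<rho> a * \<rho> ^ (\<Sum>i\<in>UNIV. n i)" .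
qed


end
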